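(* Let $G$ and $H$ be connected graphs of order at least two. Then $O_{\rm SR}(G\,\square\,H)\in\{\mathcal{M},\mathcal{B}\}$. Moreover, $O_{\rm SR}(G\,\square\,H)=\mathcal{M}$ if and only if $G_{\rm SR}\cong aK_2$ and $H_{\rm SR}\cong bK_2$ for some positive integers $a,b$.
   Context: All graphs are finite, simple and undirected; $d(x,y)$ is the shortest-path distance; $aK_2$ is the disjoint union of $a$ copies of $K_2$. The Cartesian product $G\,\square\,H$ has vertex set $V(G)\times V(H)$, with $(u,w)$ adjacent to $(u',w')$ iff either $u=u'$ and $ww'\in E(H)$, or $w=w'$ and $uu'\in E(G)$. A set $S\subseteq V(X)$ is a strong resolving set of a connected graph $X$ if for all distinct $x,y\in V(X)$ there exists $z\in S$ such that $x$ lies on a $y$–$z$ geodesic or $y$ lies on an $x$–$z$ geodesic. A vertex $u$ is maximally distant from $v$ if $d(u,v)\ge d(w,v)$ for every neighbor $w$ of $u$; $u,v$ are mutually maximally distant (MMD) if each is maximally distant from the other. The strong resolving graph $X_{\rm SR}$ has vertex set $\{x: x\text{ is MMD with some }y\}$ and edges exactly the MMD pairs. The Maker–Breaker strong resolving game on $X$: Maker and Breaker alternately select a not-yet-chosen vertex of $X$; Maker wins if the vertices he selects contain a strong resolving set of $X$, Breaker wins otherwise. In the M-game Maker moves first, in the B-game Breaker moves first. $O_{\rm SR}(X)=\mathcal{M}$ if Maker has a winning strategy in both games, $\mathcal{B}$ if Breaker has a winning strategy in both, and $\mathcal{N}$ if the first player has a winning strategy in each. *)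

theory Defs
  imports Main
begin

definition graph :: "'a set \<Rightarrow> ('a \<times> 'a) set \<Rightarrow> bool" where
  "graph V E \<longleftrightarrow> finite V \<and> E \<subseteq> V \<times> V \<and> sym E \<and> (\<forall>x. (x, x) \<notin> E)"

definition connected_graph :: "'a set \<Rightarrow> ('a \<times> 'a) set \<Rightarrow> bool" where
  "connected_graph V E \<longleftrightarrow> graph V E \<and> V \<noteq> {} \<and>
     (\<forall>x\<in>V. \<forall>y\<in>V. \<exists>n. (x, y) \<in> E ^^ n)"

definition gdist :: "('a \<times> 'a) set \<Rightarrow> 'a \<Rightarrow> 'a \<Rightarrow> nat" where
  "gdist E x y = (LEAST n. (x, y) \<in> E ^^ n)"

definition on_geodesic :: "('a \<times> 'a) set \<Rightarrow> 'a \<Rightarrow> 'a \<Rightarrow> 'a \<Rightarrow> bool" where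
  "on_geodesic E x y z \<longleftrightarrow> gdist E y x + gdist E x z = gdist E y z"

definition strong_resolving_set :: "'a set \<Rightarrow> ('a \<times> 'a) set \<Rightarrow> 'a set \<Rightarrow> bool" where
  "strong_resolving_set V E S \<longleftrightarrow> S \<subseteq> V \<and>
     (\<forall>x\<in>V. \<forall>y\<in>V. x \<noteq> y \<longrightarrow>
        (\<exists>z\<in>S. on_geodesic E x y z \<or> on_geodesic E y x z))"

definition max_distant :: "'a set \<Rightarrow> ('a \<times> 'a) set \<Rightarrow> 'a \<Rightarrow> 'a \<Rightarrow> bool" where
  "max_distant V E u v \<longleftrightarrow> u \<in> V \<and> v \<in> V \<and>
     (\<forall>w. (u, w) \<in> E \<longrightarrow> gdist E w v \<le> gdist E u v)"

definition MMD :: "'a set \<Rightarrow> ('a \<times> 'a) set \<Rightarrow> 'a \<Rightarrow> 'a \<Rightarrow> bool" where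
  "MMD V E u v \<longleftrightarrow> max_distant V E u v \<and> max_distant V E v u"

definition SR_verts :: "'a set \<Rightarrow> ('a \<times> 'a) set \<Rightarrow> 'a set" where
  "SR_verts V E = {x \<in> V. \<exists>y\<in>V. MMD V E x y}"

definition SR_edges :: "'a set \<Rightarrow> ('a \<times> 'a) set \<Rightarrow> ('a \<times> 'a) set" where
  "SR_edges V E = {(x, y). x \<in> V \<and> y \<in> V \<and> MMD V E x y}"

definition cart_verts :: "'a set \<Rightarrow> 'b set \<Rightarrow> ('a \<times> 'b) set" where
  "cart_verts VG VH = VG \<times> VH"

definition cart_edges :: "'a set \<Rightarrow> ('a \<times> 'a) set \<Rightarrow> 'b set \<Rightarrow> ('b \<times> 'b) set
    \<Rightarrow> (('a \<times> 'b) \<times> ('a \<times> 'b)) set" where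
  "cart_edges VG EG VH EH =
     {((u, w), (u', w')). (u = u' \<and> u \<in> VG \<and> (w, w') \<in> EH) \<or>
                          (w = w' \<and> w \<in> VH \<and> (u, u') \<in> EG)}"

definition graph_iso :: "'a set \<Rightarrow> ('a \<times> 'a) set \<Rightarrow> 'b set \<Rightarrow> ('b \<times> 'b) set \<Rightarrow> bool" where
  "graph_iso V1 E1 V2 E2 \<longleftrightarrow> (\<exists>f. bij_betw f V1 V2 \<and>
     (\<forall>x\<in>V1. \<forall>y\<in>V1. (x, y) \<in> E1 \<longleftrightarrow> (f x, f y) \<in> E2))"

definition aK2_verts :: "nat \<Rightarrow> (nat \<times> bool) set" where
  "aK2_verts a = {..<a} \<times> UNIV"

definition aK2_edges :: "nat \<Rightarrow> ((nat \<times> bool) \<times> (nat \<times> bool)) set" where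
  "aK2_edges a = {((i, p), (j, q)). i < a \<and> j = i \<and> p \<noteq> q}"

text \<open>Maker--Breaker game on board V; Maker wins iff his chosen set satisfies
the monotone property W.  Positions are (M, B) = sets chosen by Maker/Breaker.
maker_wins_M: Maker to move and Maker has a winning strategy;
maker_wins_B: Breaker to move and Maker has a winning strategy.\<close>

inductive maker_wins_M and maker_wins_B for V :: "'a set" and W :: "'a set \<Rightarrow> bool" where
  mwM_won: "W M \<Longrightarrow> maker_wins_M V W M B"
| mwB_won: "W M \<Longrightarrow> maker_wins_B V W M B"
| mwM_move: "v \<in> V - M - B \<Longrightarrow> maker_wins_B V W (insert v M) B \<Longrightarrow> maker_wins_M V W M B"
| mwB_move: "V - M - B \<noteq> {} \<Longrightarrow> (\<forall>v\<in>V - M - B. maker_wins_M V W M (insert v B))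
              \<Longrightarrow> maker_wins_B V W M B"

text \<open>breaker_wins_M: Maker to move and Breaker has a winning strategy;
breaker_wins_B: Breaker to move and Breaker has a winning strategy.
The game ends when all vertices are chosen.\<close>

inductive breaker_wins_M and breaker_wins_B for V :: "'a set" and W :: "'a set \<Rightarrow> bool" where
  bwM_end: "V - M - B = {} \<Longrightarrow> \<not> W M \<Longrightarrow> breaker_wins_M V W M B"
| bwB_end: "V - M - B = {} \<Longrightarrow> \<not> W M \<Longrightarrow> breaker_wins_B V W M B"
| bwM_move: "V - M - B \<noteq> {} \<Longrightarrow> (\<forall>v\<in>V - M - B. breaker_wins_B V W (insert v M) B)
              \<Longrightarrow> breaker_wins_M V W M B"
| bwB_move: "v \<in> V - M - B \<Longrightarrow> breaker_wins_M V W M (insert v B) \<Longrightarrow> breaker_wins_B V W M B"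

definition SR_win :: "'a set \<Rightarrow> ('a \<times> 'a) set \<Rightarrow> 'a set \<Rightarrow> bool" where
  "SR_win V E M \<longleftrightarrow> (\<exists>S\<subseteq>M. strong_resolving_set V E S)"

datatype outcome = Outcome_M | Outcome_B | Outcome_N

definition O_SR :: "'a set \<Rightarrow> ('a \<times> 'a) set \<Rightarrow> outcome \<Rightarrow> bool" where
  "O_SR V E res \<longleftrightarrow>
     (case res of
        Outcome_M \<Rightarrow> maker_wins_M V (SR_win V E) {} {} \<and> maker_wins_B V (SR_win V E) {} {}
      | Outcome_B \<Rightarrow> breaker_wins_M V (SR_win V E) {} {} \<and> breaker_wins_B V (SR_win V E) {} {}
      | Outcome_N \<Rightarrow> maker_wins_M V (SR_win V E) {} {} \<and> breaker_wins_B V (SR_win V E) {} {})"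

end

theory Submission
  imports Defs
begin

lemma cg_facts:
  assumes "connected_graph V E"
  shows "finite V" "E \<subseteq> V \<times> V" "sym E" "(x,x) \<notin> E" "V \<noteq> {}"
    "x \<in> V \<Longrightarrow> y \<in> V \<Longrightarrow> \<exists>n. (x,y) \<in> E ^^ n"
  using assms unfolding connected_graph_def graph_def by auto

lemma edge_in: "connected_graph V E \<Longrightarrow> (x,y) \<in> E \<Longrightarrow> x \<in> V \<and> y \<in> V"
  using cg_facts(2) by blast

lemma gdist_walk: "connected_graph V E \<Longrightarrow> x \<in> V \<Longrightarrow> y \<in> V \<Longrightarrow> (x,y) \<in> E ^^ gdist E x y"
  unfolding gdist_def by (rule LeastI_ex) (rule cg_facts(6))

lemma gdist_le: "(x,y) \<in> E ^^ n \<Longrightarrow> gdist E x y \<le> n"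
  unfolding gdist_def by (rule Least_le)

lemma gdist_refl[simp]: "gdist E x x = 0"
  using gdist_le[of x x 0 E] by auto

lemma gdist_edge: "(x,y) \<in> E \<Longrightarrow> gdist E x y \<le> 1"
  using gdist_le[of x y 1 E] by auto

lemma gdist_zero: "connected_graph V E \<Longrightarrow> x \<in> V \<Longrightarrow> y \<in> V \<Longrightarrow> gdist E x y = 0 \<Longrightarrow> x = y"
  using gdist_walk[of V E x y] by auto

lemma gdist_tri: "connected_graph V E \<Longrightarrow> x \<in> V \<Longrightarrow> y \<in> V \<Longrightarrow> z \<in> V \<Longrightarrow>
   gdist E x z \<le> gdist E x y + gdist E y z"
  by (rule gdist_le) (rule relpow_trans[OF gdist_walk gdist_walk])

lemma walk_sym: "sym E \<Longrightarrow> (x,y) \<in> E ^^ n \<Longrightarrow> (y,x) \<in> E ^^ n"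
proof (induction n arbitrary: y)
  case 0 then show ?case by auto
next
  case (Suc n)
  from Suc.prems(2) obtain w where "(x,w) \<in> E ^^ n" "(w,y) \<in> E" by (rule relpow_Suc_E)
  then have "(w,x) \<in> E ^^ n" "(y,w) \<in> E" using Suc symD by auto
  then show ?case by (rule relpow_Suc_I2[rotated])
qed

lemma gdist_sym: "connected_graph V E \<Longrightarrow> x \<in> V \<Longrightarrow> y \<in> V \<Longrightarrow> gdist E x y = gdist E y x"
  by (meson antisym cg_facts(3) gdist_le gdist_walk walk_sym)

lemma gdist_step: "connected_graph V E \<Longrightarrow> x \<in> V \<Longrightarrow> y \<in> V \<Longrightarrow> gdist E x y = Suc k \<Longrightarrow>
   \<exists>w. (x,w) \<in> E \<and> gdist E w y = k"
proof -
  assume cg: "connected_graph V E" and xy: "x \<in> V" "y \<in> V" and d: "gdist E x y = Suc k"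
  from gdist_walk[OF cg xy] d have "(x,y) \<in> E ^^ Suc k" by simp
  then obtain w where w: "(x,w) \<in> E" "(w,y) \<in> E ^^ k" by (rule relpow_Suc_E2)
  from w(2) have "gdist E w y \<le> k" by (rule gdist_le)
  moreover have "w \<in> V" using edge_in[OF cg w(1)] by auto
  moreover have "gdist E x y \<le> gdist E x w + gdist E w y" using gdist_tri[OF cg xy(1) _ xy(2)] \<open>w \<in> V\<close> by auto
  ultimately show ?thesis using gdist_edge[OF w(1)] d w(1) by (intro exI[of _ w]) auto
qed

lemma gdist_nb: "connected_graph V E \<Longrightarrow> y \<in> V \<Longrightarrow> (x,w) \<in> E \<Longrightarrow>
   gdist E w y \<le> gdist E x y + 1 \<and> gdist E x y \<le> gdist E w y + 1"
proof -
  assume cg: "connected_graph V E" and y: "y \<in> V" and e: "(x,w) \<in> E"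
  have xw: "x \<in> V" "w \<in> V" using edge_in[OF cg e] by auto
  have "(w,x) \<in> E" using e cg_facts(3)[OF cg] symD by metis
  then show ?thesis using gdist_tri[OF cg xw(1) xw(2) y] gdist_tri[OF cg xw(2) xw(1) y] gdist_edge e by force
qed

lemma finite_max: "finite A \<Longrightarrow> a \<in> A \<Longrightarrow> \<exists>u\<in>A. \<forall>u'\<in>A. (f u' :: nat) \<le> f u"
proof -
  assume "finite A" "a \<in> A"
  then have "Max (f ` A) \<in> f ` A" by (intro Max_in) auto
  then obtain u where "u \<in> A" "f u = Max (f ` A)" by auto
  then show ?thesis using \<open>finite A\<close> by (intro bexI[of _ u]) auto
qed

lemma mmd_in: "MMD V E u v \<Longrightarrow> u \<in> V \<and> v \<in> V"
  unfolding MMD_def max_distant_def by auto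

lemma mmd_sym: "MMD V E u v \<Longrightarrow> MMD V E v u"
  unfolding MMD_def by auto

lemma has_nb: "connected_graph V E \<Longrightarrow> card V \<ge> 2 \<Longrightarrow> u \<in> V \<Longrightarrow> \<exists>w. (u,w) \<in> E"
proof -
  assume cg: "connected_graph V E" and c: "card V \<ge> 2" and u: "u \<in> V"
  have "V - {u} \<noteq> {}"
  proof
    assume "V - {u} = {}"
    then have "V = {u}" using u by auto
    then show False using c by simp
  qed
  then obtain y where y: "y \<in> V" "y \<noteq> u" by auto
  then have "gdist E u y \<noteq> 0" using gdist_zero[OF cg u y(1)] by auto
  then obtain k where "gdist E u y = Suc k" using not0_implies_Suc by blast
  then show ?thesis using gdist_step[OF cg u y(1)] by blast
qed

lemma mmd_irrefl: "connected_graph V E \<Longrightarrow> card V \<ge> 2 \<Longrightarrow> MMD V E u v \<Longrightarrow> u \<noteq> v"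
proof
  assume cg: "connected_graph V E" and c: "card V \<ge> 2" and m: "MMD V E u v" and "u = v"
  then have u: "u \<in> V" using mmd_in by metis
  obtain w where w: "(u,w) \<in> E" using has_nb[OF cg c u] by auto
  have "w \<noteq> u" using w cg_facts(4)[OF cg] by auto
  then have "gdist E w u \<noteq> 0" using gdist_zero[OF cg _ u] edge_in[OF cg w] by auto
  moreover have "gdist E w v \<le> gdist E u v" using m w unfolding MMD_def max_distant_def by auto
  ultimately show False using \<open>u = v\<close> by simp
qed

lemma sr_mmd_half:
  assumes cg: "connected_graph V E" and m: "max_distant V E u v" and z: "z \<in> V"
    and g: "on_geodesic E u v z"
  shows "z = u"
proof (rule ccontr)
  assume "z \<noteq> u"
  have u: "u \<in> V" and v: "v \<in> V" using m unfolding max_distant_def by auto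
  have "gdist E u z \<noteq> 0" using gdist_zero[OF cg u z] \<open>z \<noteq> u\<close> by auto
  then obtain k where k: "gdist E u z = Suc k" using not0_implies_Suc by blast
  obtain w where w: "(u,w) \<in> E" "gdist E w z = k" using gdist_step[OF cg u z k] by blast
  have wV: "w \<in> V" using edge_in[OF cg w(1)] by auto
  have "gdist E v z \<le> gdist E v w + gdist E w z" using gdist_tri[OF cg v wV z] .
  moreover have "gdist E v u + gdist E u z = gdist E v z" using g unfolding on_geodesic_def .
  moreover have "gdist E w v \<le> gdist E u v" using m w(1) unfolding max_distant_def by auto
  moreover have "gdist E w v = gdist E v w" "gdist E u v = gdist E v u"
    using gdist_sym[OF cg] wV u v by auto
  ultimately show False using k w(2) by linarith
qed

lemma sr_mmd:
  assumes cg: "connected_graph V E" and c: "card V \<ge> 2"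
    and S: "strong_resolving_set V E S" and m: "MMD V E u v"
  shows "u \<in> S \<or> v \<in> S"
proof -
  have uv: "u \<noteq> v" using mmd_irrefl[OF cg c m] .
  have "u \<in> V" "v \<in> V" using mmd_in[OF m] by auto
  then obtain z where z: "z \<in> S" "on_geodesic E u v z \<or> on_geodesic E v u z"
    using S uv unfolding strong_resolving_set_def by blast
  have zV: "z \<in> V" using S z(1) unfolding strong_resolving_set_def by auto
  from z(2) show ?thesis
  proof
    assume "on_geodesic E u v z"
    then have "z = u" using sr_mmd_half[OF cg _ zV] m unfolding MMD_def by blast
    then show ?thesis using z(1) by auto
  next
    assume "on_geodesic E v u z"
    then have "z = v" using sr_mmd_half[OF cg _ zV] m unfolding MMD_def by blast
    then show ?thesis using z(1) by auto
  qed
qed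

lemma cover_sr:
  assumes cg: "connected_graph V E" and SV: "S \<subseteq> V"
    and cov: "\<And>u v. MMD V E u v \<Longrightarrow> u \<in> S \<or> v \<in> S"
  shows "strong_resolving_set V E S"
  unfolding strong_resolving_set_def
proof (intro conjI SV ballI impI)
  fix x y assume x: "x \<in> V" and y: "y \<in> V" and "x \<noteq> y"
  let ?d = "gdist E"
  have sym: "\<And>a b. a \<in> V \<Longrightarrow> b \<in> V \<Longrightarrow> ?d a b = ?d b a" using gdist_sym[OF cg] by blast
  have tri: "\<And>a b c. a \<in> V \<Longrightarrow> b \<in> V \<Longrightarrow> c \<in> V \<Longrightarrow> ?d a c \<le> ?d a b + ?d b c"
    using gdist_tri[OF cg] by blast
  define A where "A = {u \<in> V. ?d x y + ?d y u = ?d x u}"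
  have "y \<in> A" unfolding A_def using y by simp
  moreover have "finite A" unfolding A_def using cg_facts(1)[OF cg] by auto
  ultimately obtain u where uA: "u \<in> A" and umax: "\<forall>u'\<in>A. ?d x u' \<le> ?d x u"
    using finite_max[of A y "?d x"] by blast
  have u: "u \<in> V" and yu: "?d x y + ?d y u = ?d x u" using uA unfolding A_def by auto
  have umd: "\<forall>w. (u,w) \<in> E \<longrightarrow> ?d w x \<le> ?d u x"
  proof (intro allI impI)
    fix w assume w: "(u,w) \<in> E"
    have wV: "w \<in> V" using edge_in[OF cg w] by auto
    show "?d w x \<le> ?d u x"
    proof (rule ccontr)
      assume "\<not> ?thesis"
      then have gt: "?d x w > ?d x u" using sym[OF wV x] sym[OF u x] by linarith
      have "?d y w \<le> ?d y u + 1" using gdist_nb[OF cg y w] sym[OF u y] sym[OF wV y] by linarith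
      moreover have "?d x w \<le> ?d x u + 1" using gdist_nb[OF cg x w] sym[OF u x] sym[OF wV x] by linarith
      moreover have "?d x w \<le> ?d x y + ?d y w" using tri[OF x y wV] .
      ultimately have "?d x y + ?d y w = ?d x w" using gt yu by linarith
      then have "w \<in> A" unfolding A_def using wV by auto
      then show False using umax gt by auto
    qed
  qed
  define B where "B = {v \<in> V. ?d u x + ?d x v = ?d u v}"
  have "x \<in> B" unfolding B_def using x by simp
  moreover have "finite B" unfolding B_def using cg_facts(1)[OF cg] by auto
  ultimately obtain v where vB: "v \<in> B" and vmax: "\<forall>v'\<in>B. ?d u v' \<le> ?d u v"
    using finite_max[of B x "?d u"] by blast
  have v: "v \<in> V" and xv: "?d u x + ?d x v = ?d u v" using vB unfolding B_def by auto
  have vmd: "\<forall>w. (v,w) \<in> E \<longrightarrow> ?d w u \<le> ?d v u"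
  proof (intro allI impI)
    fix w assume w: "(v,w) \<in> E"
    have wV: "w \<in> V" using edge_in[OF cg w] by auto
    show "?d w u \<le> ?d v u"
    proof (rule ccontr)
      assume "\<not> ?thesis"
      then have gt: "?d u w > ?d u v" using sym[OF wV u] sym[OF u v] by linarith
      have "?d x w \<le> ?d x v + 1" using gdist_nb[OF cg x w] sym[OF v x] sym[OF wV x] by linarith
      moreover have "?d u w \<le> ?d u v + 1" using gdist_nb[OF cg u w] sym[OF v u] sym[OF wV u] by linarith
      moreover have "?d u w \<le> ?d u x + ?d x w" using tri[OF u x wV] .
      ultimately have "?d u x + ?d x w = ?d u w" using gt xv by linarith
      then have "w \<in> B" unfolding B_def using wV by auto
      then show False using vmax gt by auto
    qed
  qed
  have umd2: "\<forall>w. (u,w) \<in> E \<longrightarrow> ?d w v \<le> ?d u v"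
  proof (intro allI impI)
    fix w assume w: "(u,w) \<in> E"
    have wV: "w \<in> V" using edge_in[OF cg w] by auto
    have "?d v w \<le> ?d v x + ?d x w" using tri[OF v x wV] .
    moreover have "?d w x \<le> ?d u x" using umd w by auto
    ultimately show "?d w v \<le> ?d u v" using sym[OF wV v] sym[OF wV x] sym[OF v x] sym[OF u x] sym[OF u v] xv
      by linarith
  qed
  have "MMD V E u v" unfolding MMD_def max_distant_def using u v umd2 vmd by auto
  then have "u \<in> S \<or> v \<in> S" using cov by auto
  then show "\<exists>z\<in>S. on_geodesic E x y z \<or> on_geodesic E y x z"
  proof
    assume "u \<in> S"
    then show ?thesis using yu unfolding on_geodesic_def by auto
  next
    assume vS: "v \<in> S"
    have "?d y v \<le> ?d y x + ?d x v" using tri[OF y x v] .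
    moreover have "?d u v \<le> ?d u y + ?d y v" using tri[OF u y v] .
    ultimately have "?d y x + ?d x v = ?d y v" using xv yu sym[OF u x] sym[OF u y] sym[OF x y] by linarith
    then show ?thesis using vS unfolding on_geodesic_def by auto
  qed
qed

lemma diam_pair: "connected_graph V E \<Longrightarrow> \<exists>u v. MMD V E u v"
proof -
  assume cg: "connected_graph V E"
  obtain a where a: "a \<in> V" using cg_facts(5)[OF cg] by auto
  have "finite (V \<times> V)" using cg_facts(1)[OF cg] by auto
  then obtain p where p: "p \<in> V \<times> V" and pm: "\<forall>p'\<in>V \<times> V. (\<lambda>(x,y). gdist E x y) p' \<le> (\<lambda>(x,y). gdist E x y) p"
    using finite_max[of "V \<times> V" "(a,a)" "\<lambda>(x,y). gdist E x y"] a by blast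
  obtain u v where uv: "p = (u,v)" by (cases p)
  have u: "u \<in> V" and v: "v \<in> V" using p uv by auto
  have "max_distant V E u v" unfolding max_distant_def using u v pm uv edge_in[OF cg] by fastforce
  moreover have "max_distant V E v u" unfolding max_distant_def using u v pm uv edge_in[OF cg]
    gdist_sym[OF cg u v] by fastforce
  ultimately show ?thesis unfolding MMD_def by blast
qed

lemma cart_edge_iff: "(((u,w),(u',w')) \<in> cart_edges VG EG VH EH) \<longleftrightarrow>
   (u = u' \<and> u \<in> VG \<and> (w, w') \<in> EH) \<or> (w = w' \<and> w \<in> VH \<and> (u, u') \<in> EG)"
  unfolding cart_edges_def by auto

lemma prod_walk1: "(g,g') \<in> EG ^^ n \<Longrightarrow> h \<in> VH \<Longrightarrow>
   ((g,h),(g',h)) \<in> cart_edges VG EG VH EH ^^ n"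
proof (induction n arbitrary: g')
  case 0 then show ?case by auto
next
  case (Suc n)
  from Suc.prems(1) obtain a where "(g,a) \<in> EG ^^ n" "(a,g') \<in> EG" by (rule relpow_Suc_E)
  then show ?case using Suc by (intro relpow_Suc_I[of _ "(a,h)"]) (auto simp: cart_edge_iff)
qed

lemma prod_walk2: "(h,h') \<in> EH ^^ n \<Longrightarrow> g \<in> VG \<Longrightarrow>
   ((g,h),(g,h')) \<in> cart_edges VG EG VH EH ^^ n"
proof (induction n arbitrary: h')
  case 0 then show ?case by auto
next
  case (Suc n)
  from Suc.prems(1) obtain a where "(h,a) \<in> EH ^^ n" "(a,h') \<in> EH" by (rule relpow_Suc_E)
  then show ?case using Suc by (intro relpow_Suc_I[of _ "(g,a)"]) (auto simp: cart_edge_iff)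
qed

lemma prod_walk_proj:
  assumes cG: "connected_graph VG EG" and cH: "connected_graph VH EH"
  shows "((g,h),(x,y)) \<in> cart_edges VG EG VH EH ^^ n \<Longrightarrow> g \<in> VG \<Longrightarrow> h \<in> VH \<Longrightarrow>
    x \<in> VG \<and> y \<in> VH \<and> gdist EG g x + gdist EH h y \<le> n"
proof (induction n arbitrary: x y)
  case 0 then show ?case by auto
next
  case (Suc n)
  from Suc.prems(1) obtain p where p1: "((g,h),p) \<in> cart_edges VG EG VH EH ^^ n"
     and p2: "(p,(x,y)) \<in> cart_edges VG EG VH EH" by (rule relpow_Suc_E)
  obtain a b where ab: "p = (a,b)" by (cases p)
  have IH: "a \<in> VG \<and> b \<in> VH \<and> gdist EG g a + gdist EH h b \<le> n" using Suc ab p1 by auto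
  from p2[unfolded ab cart_edge_iff] show ?case
  proof
    assume e: "a = x \<and> a \<in> VG \<and> (b, y) \<in> EH"
    then have "y \<in> VH" using edge_in[OF cH] by blast
    then have "gdist EH h y \<le> gdist EH h b + gdist EH b y" using gdist_tri[OF cH] IH Suc by blast
    then show ?thesis using e IH gdist_edge[of b y EH] \<open>y \<in> VH\<close> by auto
  next
    assume e: "b = y \<and> b \<in> VH \<and> (a, x) \<in> EG"
    then have "x \<in> VG" using edge_in[OF cG] by blast
    then have "gdist EG g x \<le> gdist EG g a + gdist EG a x" using gdist_tri[OF cG] IH Suc by blast
    then show ?thesis using e IH gdist_edge[of a x EG] \<open>x \<in> VG\<close> by auto
  qed
qed

lemma prod_walk:
  assumes cG: "connected_graph VG EG" and cH: "connected_graph VH EH"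
    and "g \<in> VG" "g' \<in> VG" "h \<in> VH" "h' \<in> VH"
  shows "((g,h),(g',h')) \<in> cart_edges VG EG VH EH ^^ (gdist EG g g' + gdist EH h h')"
proof -
  have "((g,h),(g',h)) \<in> cart_edges VG EG VH EH ^^ gdist EG g g'"
    by (rule prod_walk1[OF gdist_walk[OF cG assms(3,4)] assms(5)])
  moreover have "((g',h),(g',h')) \<in> cart_edges VG EG VH EH ^^ gdist EH h h'"
    by (rule prod_walk2[OF gdist_walk[OF cH assms(5,6)] assms(4)])
  ultimately show ?thesis by (rule relpow_trans)
qed

lemma prod_dist:
  assumes cG: "connected_graph VG EG" and cH: "connected_graph VH EH"
    and "g \<in> VG" "g' \<in> VG" "h \<in> VH" "h' \<in> VH"
  shows "gdist (cart_edges VG EG VH EH) (g,h) (g',h') = gdist EG g g' + gdist EH h h'"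
proof (rule antisym)
  show "gdist (cart_edges VG EG VH EH) (g,h) (g',h') \<le> gdist EG g g' + gdist EH h h'"
    using gdist_le[OF prod_walk[OF assms]] .
  have "((g,h),(g',h')) \<in> cart_edges VG EG VH EH ^^ gdist (cart_edges VG EG VH EH) (g,h) (g',h')"
    unfolding gdist_def by (rule LeastI_ex) (use prod_walk[OF assms] in blast)
  then show "gdist EG g g' + gdist EH h h' \<le> gdist (cart_edges VG EG VH EH) (g,h) (g',h')"
    using prod_walk_proj[OF cG cH] assms by blast
qed

lemma prod_connected:
  assumes cG: "connected_graph VG EG" and cH: "connected_graph VH EH"
  shows "connected_graph (cart_verts VG VH) (cart_edges VG EG VH EH)"
  unfolding connected_graph_def graph_def
proof (intro conjI)
  show "finite (cart_verts VG VH)" unfolding cart_verts_def using cg_facts(1)[OF cG] cg_facts(1)[OF cH] by auto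
  show "cart_edges VG EG VH EH \<subseteq> cart_verts VG VH \<times> cart_verts VG VH"
    unfolding cart_verts_def cart_edges_def using cg_facts(2)[OF cG] cg_facts(2)[OF cH] by auto
  show "sym (cart_edges VG EG VH EH)"
    unfolding sym_def cart_edges_def using cg_facts(3)[OF cG] cg_facts(3)[OF cH]
    by (auto dest: symD)
  show "\<forall>x. (x, x) \<notin> cart_edges VG EG VH EH"
    unfolding cart_edges_def using cg_facts(4)[OF cG] cg_facts(4)[OF cH] by auto
  show "cart_verts VG VH \<noteq> {}" unfolding cart_verts_def using cg_facts(5)[OF cG] cg_facts(5)[OF cH] by auto
  show "\<forall>x\<in>cart_verts VG VH. \<forall>y\<in>cart_verts VG VH. \<exists>n. (x, y) \<in> cart_edges VG EG VH EH ^^ n"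
    unfolding cart_verts_def using prod_walk[OF cG cH] by blast
qed

lemma prod_card:
  assumes "finite VG" "finite VH" "card VG \<ge> 2" "card VH \<ge> 2"
  shows "card (cart_verts VG VH) \<ge> 2"
proof -
  have "card (cart_verts VG VH) = card VG * card VH" unfolding cart_verts_def by (simp add: card_cartesian_product)
  moreover have "card VG * card VH \<ge> 2 * 1" using assms by (intro mult_mono) auto
  ultimately show ?thesis by simp
qed

lemma prod_maxd:
  assumes cG: "connected_graph VG EG" and cH: "connected_graph VH EH"
    and g: "g \<in> VG" "g' \<in> VG" and h: "h \<in> VH" "h' \<in> VH"
  shows "max_distant (cart_verts VG VH) (cart_edges VG EG VH EH) (g,h) (g',h') \<longleftrightarrow>
     max_distant VG EG g g' \<and> max_distant VH EH h h'"
proof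
  assume m: "max_distant (cart_verts VG VH) (cart_edges VG EG VH EH) (g,h) (g',h')"
  have "\<forall>w. (g,w) \<in> EG \<longrightarrow> gdist EG w g' \<le> gdist EG g g'"
  proof (intro allI impI)
    fix w assume w: "(g,w) \<in> EG"
    then have wV: "w \<in> VG" using edge_in[OF cG] by blast
    have "((g,h),(w,h)) \<in> cart_edges VG EG VH EH" using w h by (simp add: cart_edge_iff)
    then show "gdist EG w g' \<le> gdist EG g g'" using m prod_dist[OF cG cH] g h wV
      unfolding max_distant_def by fastforce
  qed
  moreover have "\<forall>w. (h,w) \<in> EH \<longrightarrow> gdist EH w h' \<le> gdist EH h h'"
  proof (intro allI impI)
    fix w assume w: "(h,w) \<in> EH"
    then have wV: "w \<in> VH" using edge_in[OF cH] by blast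
    have "((g,h),(g,w)) \<in> cart_edges VG EG VH EH" using w g by (simp add: cart_edge_iff)
    then show "gdist EH w h' \<le> gdist EH h h'" using m prod_dist[OF cG cH] g h wV
      unfolding max_distant_def by fastforce
  qed
  ultimately show "max_distant VG EG g g' \<and> max_distant VH EH h h'"
    unfolding max_distant_def using g h by auto
next
  assume m: "max_distant VG EG g g' \<and> max_distant VH EH h h'"
  show "max_distant (cart_verts VG VH) (cart_edges VG EG VH EH) (g,h) (g',h')"
    unfolding max_distant_def
  proof (intro conjI allI impI)
    show "(g, h) \<in> cart_verts VG VH" "(g', h') \<in> cart_verts VG VH" using g h by (auto simp: cart_verts_def)
    fix p assume p: "((g, h), p) \<in> cart_edges VG EG VH EH"
    obtain a b where ab: "p = (a,b)" by (cases p)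
    from p[unfolded ab cart_edge_iff]
    show "gdist (cart_edges VG EG VH EH) p (g', h') \<le> gdist (cart_edges VG EG VH EH) (g, h) (g', h')"
    proof
      assume e: "g = a \<and> g \<in> VG \<and> (h, b) \<in> EH"
      then have "b \<in> VH" using edge_in[OF cH] by blast
      then show ?thesis using e m ab prod_dist[OF cG cH] g h unfolding max_distant_def by auto
    next
      assume e: "h = b \<and> h \<in> VH \<and> (g, a) \<in> EG"
      then have "a \<in> VG" using edge_in[OF cG] by blast
      then show ?thesis using e m ab prod_dist[OF cG cH] g h unfolding max_distant_def by auto
    qed
  qed
qed

lemma prod_MMD:
  assumes cG: "connected_graph VG EG" and cH: "connected_graph VH EH"
  shows "MMD (cart_verts VG VH) (cart_edges VG EG VH EH) (g,h) (g',h') \<longleftrightarrow>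
     MMD VG EG g g' \<and> MMD VH EH h h'"
proof (cases "g \<in> VG \<and> g' \<in> VG \<and> h \<in> VH \<and> h' \<in> VH")
  case True
  then show ?thesis unfolding MMD_def using prod_maxd[OF cG cH] by blast
next
  case False
  then show ?thesis unfolding MMD_def max_distant_def cart_verts_def by auto
qed

lemma breaker_not_W:
  assumes mono: "\<And>M M'. M \<subseteq> M' \<Longrightarrow> W M \<Longrightarrow> W M'"
  shows "breaker_wins_M V W M B \<Longrightarrow> \<not> W M" and "breaker_wins_B V W M B \<Longrightarrow> \<not> W M"
proof (induction rule: breaker_wins_M_breaker_wins_B.inducts)
  case (bwM_move M B)
  from bwM_move(1) obtain v where v: "v \<in> V - M - B" by auto
  have n: "\<not> W (insert v M)" using bspec[OF bwM_move(2) v] by (rule conjunct2)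
  show ?case
  proof
    assume "W M"
    then have "W (insert v M)" by (rule mono[rotated]) (rule subset_insertI)
    then show False using n by contradiction
  qed
next
  case (bwB_move v M B)
  show ?case by (rule bwB_move(3))
qed

lemma exclusive:
  assumes mono: "\<And>M M'. M \<subseteq> M' \<Longrightarrow> W M \<Longrightarrow> W M'"
  shows "maker_wins_M V W M B \<Longrightarrow> breaker_wins_M V W M B \<Longrightarrow> False"
    and "maker_wins_B V W M B \<Longrightarrow> breaker_wins_B V W M B \<Longrightarrow> False"
proof (induction rule: maker_wins_M_maker_wins_B.inducts)
  case (mwM_won M B)
  have "\<not> W M" by (rule breaker_not_W(1)[of W, OF mono mwM_won.prems])
  then show ?case using mwM_won.IH by contradiction
next
  case (mwB_won M B)
  have "\<not> W M" by (rule breaker_not_W(2)[of W, OF mono mwB_won.prems])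
  then show ?case using mwB_won.IH by contradiction
next
  case (mwM_move v M B)
  note h = mwM_move
  from mwM_move.prems show ?case
  proof cases
    case bwM_end then show ?thesis using h(1) bwM_end(1) by blast
  next
    case bwM_move
    have "breaker_wins_B V W (insert v M) B" using bspec[OF bwM_move(2) h(1)] .
    then show ?thesis by (rule h(3))
  qed
next
  case (mwB_move M B)
  note h = mwB_move
  from mwB_move.prems show ?case
  proof cases
    case bwB_end then show ?thesis using h(1) bwB_end(1) by blast
  next
    case (bwB_move v)
    have "breaker_wins_M V W M (insert v B) \<longrightarrow> False" using bspec[OF h(2) bwB_move(1)] by (rule conjunct2)
    then show ?thesis using bwB_move(2) by (rule mp)
  qed
qed

lemma breaker_won:
  assumes fin: "finite V" and bad: "\<And>M. p \<notin> M \<Longrightarrow> q \<notin> M \<Longrightarrow> \<not> W M"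
  shows "p \<in> B \<Longrightarrow> q \<in> B \<Longrightarrow> M \<inter> B = {} \<Longrightarrow>
     breaker_wins_M V W M B \<and> breaker_wins_B V W M B"
proof (induction "card (V - M - B)" arbitrary: M B rule: less_induct)
  case less
  have nW: "\<not> W M" using bad less.prems by auto
  show ?case
  proof (cases "V - M - B = {}")
    case True
    then show ?thesis using nW by (auto intro: bwM_end bwB_end)
  next
    case False
    then obtain v where v: "v \<in> V - M - B" by auto
    have c1: "\<And>u. u \<in> V - M - B \<Longrightarrow> card (V - insert u M - B) < card (V - M - B)"
      using fin by (intro psubset_card_mono) auto
    have c2: "\<And>u. u \<in> V - M - B \<Longrightarrow> card (V - M - insert u B) < card (V - M - B)"
      using fin by (intro psubset_card_mono) auto
    have "breaker_wins_M V W M B"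
    proof (rule bwM_move[OF False], intro ballI)
      fix u assume u: "u \<in> V - M - B"
      show "breaker_wins_B V W (insert u M) B"
        using less.hyps[OF c1[OF u]] less.prems u by auto
    qed
    moreover have "breaker_wins_B V W M B"
      using bwB_move[OF v] less.hyps[OF c2[OF v]] less.prems v by auto
    ultimately show ?thesis by auto
  qed
qed

lemma cherry_B:
  assumes fin: "finite V"
    and bad1: "\<And>M. c \<notin> M \<Longrightarrow> la \<notin> M \<Longrightarrow> \<not> W M"
    and bad2: "\<And>M. c \<notin> M \<Longrightarrow> lb \<notin> M \<Longrightarrow> \<not> W M"
    and free: "c \<in> V - M - B" "la \<in> V - M - B" "lb \<in> V - M - B"
    and dist: "c \<noteq> la" "c \<noteq> lb" "la \<noteq> lb" and disj: "M \<inter> B = {}"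
  shows "breaker_wins_B V W M B"
proof (rule bwB_move[OF free(1)])
  show "breaker_wins_M V W M (insert c B)"
  proof (rule bwM_move)
    show "V - M - insert c B \<noteq> {}" using free dist by auto
    show "\<forall>v\<in>V - M - insert c B. breaker_wins_B V W (insert v M) (insert c B)"
    proof
      fix m assume m: "m \<in> V - M - insert c B"
      show "breaker_wins_B V W (insert m M) (insert c B)"
      proof (cases "m = la")
        case True
        have "breaker_wins_M V W (insert m M) (insert lb (insert c B))"
          using breaker_won[OF fin bad2, where B="insert lb (insert c B)" and M="insert m M"] True m free dist disj by auto
        then show ?thesis by (rule bwB_move[rotated]) (use True m free dist in auto)
      next
        case False
        have "breaker_wins_M V W (insert m M) (insert la (insert c B))"
          using breaker_won[OF fin bad1, where B="insert la (insert c B)" and M="insert m M"] False m free dist disj by auto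
        then show ?thesis by (rule bwB_move[rotated]) (use False m free dist in auto)
      qed
    qed
  qed
qed

lemma two_cherries:
  assumes fin: "finite V"
    and bad1: "\<And>M. c \<notin> M \<Longrightarrow> la \<notin> M \<Longrightarrow> \<not> W M"
    and bad2: "\<And>M. c \<notin> M \<Longrightarrow> lb \<notin> M \<Longrightarrow> \<not> W M"
    and bad1': "\<And>M. c' \<notin> M \<Longrightarrow> la' \<notin> M \<Longrightarrow> \<not> W M"
    and bad2': "\<And>M. c' \<notin> M \<Longrightarrow> lb' \<notin> M \<Longrightarrow> \<not> W M"
    and inV: "c \<in> V" "la \<in> V" "lb \<in> V" "c' \<in> V" "la' \<in> V" "lb' \<in> V"
    and dist: "c \<noteq> la" "c \<noteq> lb" "la \<noteq> lb" "c' \<noteq> la'" "c' \<noteq> lb'" "la' \<noteq> lb'"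
    and disj: "{c, la, lb} \<inter> {c', la', lb'} = {}"
  shows "breaker_wins_B V W {} {} \<and> breaker_wins_M V W {} {}"
proof
  show "breaker_wins_B V W {} {}"
    by (rule cherry_B[where V=V and W=W and c=c and la=la and lb=lb and M="{}" and B="{}", OF fin bad1 bad2]) (use inV dist in auto)
  show "breaker_wins_M V W {} {}"
  proof (rule bwM_move)
    show "V - {} - {} \<noteq> {}" using inV by auto
    show "\<forall>v\<in>V - {} - {}. breaker_wins_B V W (insert v {}) {}"
    proof
      fix m assume m: "m \<in> V - {} - {}"
      show "breaker_wins_B V W (insert m {}) {}"
      proof (cases "m \<in> {c, la, lb}")
        case True
        then have "m \<notin> {c', la', lb'}" using disj by auto
        then show ?thesis by (intro cherry_B[where V=V and W=W and c=c' and la=la' and lb=lb' and M="{m}" and B="{}", OF fin bad1' bad2']) (use inV dist in auto)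
      next
        case False
        then show ?thesis by (intro cherry_B[where V=V and W=W and c=c and la=la and lb=lb and M="{m}" and B="{}", OF fin bad1 bad2]) (use inV dist in auto)
      qed
    qed
  qed
qed

lemma maker_pairing:
  assumes fin: "finite V" and DV: "D \<subseteq> V"
    and sig: "\<And>p. p \<in> D \<Longrightarrow> \<sigma> p \<in> D \<and> \<sigma> p \<noteq> p \<and> \<sigma> (\<sigma> p) = p"
    and win: "\<And>M. M \<subseteq> V \<Longrightarrow> (\<forall>p\<in>D. p \<in> M \<or> \<sigma> p \<in> M) \<Longrightarrow> W M"
  shows "M \<subseteq> V \<Longrightarrow> B \<subseteq> V \<Longrightarrow> M \<inter> B = {} \<Longrightarrow> (\<forall>p\<in>D. p \<in> B \<longrightarrow> \<sigma> p \<in> M) \<Longrightarrow>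
    maker_wins_M V W M B \<and> maker_wins_B V W M B"
proof (induction "card (V - M - B)" arbitrary: M B rule: less_induct)
  case less
  have c1: "\<And>u. u \<in> V - M - B \<Longrightarrow> card (V - insert u M - B) < card (V - M - B)"
    using fin by (intro psubset_card_mono) auto
  have c2: "\<And>u. u \<in> V - M - B \<Longrightarrow> card (V - M - insert u B) < card (V - M - B)"
    using fin by (intro psubset_card_mono) auto
  show ?case
  proof (cases "V - M - B = {}")
    case True
    have "\<forall>p\<in>D. p \<in> M \<or> \<sigma> p \<in> M" using True less.prems DV by blast
    then have "W M" using win less.prems by auto
    then show ?thesis by (auto intro: mwM_won mwB_won)
  next
    case False
    then obtain v where v: "v \<in> V - M - B" by auto
    have "maker_wins_M V W M B"
      by (rule mwM_move[OF v]) (use less.hyps[OF c1[OF v]] less.prems v in auto)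
    moreover have "maker_wins_B V W M B"
    proof (rule mwB_move[OF False], intro ballI)
      fix b assume b: "b \<in> V - M - B"
      show "maker_wins_M V W M (insert b B)"
      proof (cases "b \<in> D \<and> \<sigma> b \<notin> M")
        case True
        have sb: "\<sigma> b \<in> D" "\<sigma> b \<noteq> b" "\<sigma> (\<sigma> b) = b" using sig True by auto
        have "\<sigma> b \<notin> B" using less.prems(4) sb b by auto
        then have sfree: "\<sigma> b \<in> V - M - insert b B" using sb DV True by auto
        have lt: "card (V - insert (\<sigma> b) M - insert b B) < card (V - M - B)"
          using fin sfree b by (intro psubset_card_mono) auto
        have "maker_wins_B V W (insert (\<sigma> b) M) (insert b B)"
          using less.hyps[OF lt] less.prems sfree b DV by auto
        then show ?thesis by (rule mwM_move[OF sfree])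
      next
        case False
        show ?thesis
          using less.hyps[OF c2[OF b]] less.prems b False by auto
      qed
    qed
    ultimately show ?thesis by auto
  qed
qed

definition uniqMMD :: "'a set \<Rightarrow> ('a \<times> 'a) set \<Rightarrow> bool" where
  "uniqMMD V E \<longleftrightarrow> (\<forall>x y z. MMD V E x y \<longrightarrow> MMD V E x z \<longrightarrow> y = z)"

lemma SR_win_mono: "M \<subseteq> M' \<Longrightarrow> SR_win V E M \<Longrightarrow> SR_win V E M'"
  unfolding SR_win_def by blast

lemma SR_win_bad: "connected_graph V E \<Longrightarrow> card V \<ge> 2 \<Longrightarrow> MMD V E p q \<Longrightarrow>
   p \<notin> M \<Longrightarrow> q \<notin> M \<Longrightarrow> \<not> SR_win V E M"
proof
  assume cg: "connected_graph V E" and c: "card V \<ge> 2" and m: "MMD V E p q" and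
    pq: "p \<notin> M" "q \<notin> M" and "SR_win V E M"
  then obtain S where S: "S \<subseteq> M" "strong_resolving_set V E S" unfolding SR_win_def by auto
  have "p \<in> S \<or> q \<in> S" by (rule sr_mmd[OF cg c S(2) m])
  then show False using S(1) pq by auto
qed

lemma SR_win_cover: "connected_graph V E \<Longrightarrow> M \<subseteq> V \<Longrightarrow>
   (\<And>u v. MMD V E u v \<Longrightarrow> u \<in> M \<or> v \<in> M) \<Longrightarrow> SR_win V E M"
  unfolding SR_win_def by (rule exI[of _ M]) (simp add: cover_sr)

lemma the_mmd: "uniqMMD V E \<Longrightarrow> MMD V E x y \<Longrightarrow> (THE y. MMD V E x y) = y"
  unfolding uniqMMD_def by (rule the_equality) auto

lemma sigma_facts:
  assumes cg: "connected_graph V E" and c: "card V \<ge> 2" and u: "uniqMMD V E"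
    and x: "x \<in> SR_verts V E"
  shows "MMD V E x (THE y. MMD V E x y)" "(THE y. MMD V E x y) \<in> SR_verts V E"
    "(THE y. MMD V E x y) \<noteq> x"
    "(THE y'. MMD V E (THE y. MMD V E x y) y') = x"
    "\<And>y. MMD V E x y \<Longrightarrow> y = (THE y. MMD V E x y)"
proof -
  obtain y where y: "MMD V E x y" using x unfolding SR_verts_def by auto
  have thx: "(THE y. MMD V E x y) = y" using the_mmd[OF u y] .
  show "MMD V E x (THE y. MMD V E x y)" using y thx by simp
  show "\<And>z. MMD V E x z \<Longrightarrow> z = (THE y. MMD V E x y)" using the_mmd[OF u] by metis
  have yx: "MMD V E y x" using mmd_sym[OF y] .
  show "(THE y. MMD V E x y) \<in> SR_verts V E" using thx yx mmd_in[OF y]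
    unfolding SR_verts_def by auto
  show "(THE y. MMD V E x y) \<noteq> x" using thx mmd_irrefl[OF cg c y] by simp
  show "(THE y'. MMD V E (THE y. MMD V E x y) y') = x" using thx the_mmd[OF u yx] by simp
qed

lemma maker_uniq:
  assumes cg: "connected_graph V E" and c: "card V \<ge> 2" and u: "uniqMMD V E"
  shows "maker_wins_M V (SR_win V E) {} {} \<and> maker_wins_B V (SR_win V E) {} {}"
proof (rule maker_pairing[where D="SR_verts V E" and \<sigma>="\<lambda>x. THE y. MMD V E x y"])
  show "finite V" using cg_facts(1)[OF cg] .
  show "SR_verts V E \<subseteq> V" unfolding SR_verts_def by auto
  fix p assume p: "p \<in> SR_verts V E"
  show "(THE y. MMD V E p y) \<in> SR_verts V E \<and>
      (THE y. MMD V E p y) \<noteq> p \<and> (THE y. MMD V E (THE y. MMD V E p y) y) = p"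
    using sigma_facts(2-4)[OF cg c u p] by simp
next
  fix M assume MV: "M \<subseteq> V" and cov: "\<forall>p\<in>SR_verts V E. p \<in> M \<or> (THE y. MMD V E p y) \<in> M"
  show "SR_win V E M"
  proof (rule SR_win_cover[OF cg MV])
    fix x y assume m: "MMD V E x y"
    then have xS: "x \<in> SR_verts V E" unfolding SR_verts_def using mmd_in[OF m] by auto
    have "y = (THE y. MMD V E x y)" using sigma_facts(5)[OF cg c u xS m] .
    then show "x \<in> M \<or> y \<in> M" using bspec[OF cov xS] by simp
  qed
qed auto

lemma iso_uniq:
  assumes iso: "graph_iso (SR_verts V E) (SR_edges V E) (aK2_verts a) (aK2_edges a)"
  shows "uniqMMD V E"
  unfolding uniqMMD_def
proof (intro allI impI)
  fix x y z assume xy: "MMD V E x y" and xz: "MMD V E x z"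
  obtain f where bij: "bij_betw f (SR_verts V E) (aK2_verts a)"
    and e: "\<forall>x\<in>SR_verts V E. \<forall>y\<in>SR_verts V E. (x, y) \<in> SR_edges V E \<longleftrightarrow> (f x, f y) \<in> aK2_edges a"
    using iso unfolding graph_iso_def by blast
  have S: "x \<in> SR_verts V E" "y \<in> SR_verts V E" "z \<in> SR_verts V E"
    using mmd_in[OF xy] mmd_in[OF xz] mmd_sym[OF xy] mmd_sym[OF xz] xy unfolding SR_verts_def by auto
  have "(x,y) \<in> SR_edges V E" "(x,z) \<in> SR_edges V E"
    using xy xz mmd_in[OF xy] mmd_in[OF xz] unfolding SR_edges_def by auto
  then have "(f x, f y) \<in> aK2_edges a" "(f x, f z) \<in> aK2_edges a" using e S by auto
  then have "f y = f z" unfolding aK2_edges_def by (cases "f x"; cases "f y"; cases "f z") auto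
  then show "y = z" using bij S unfolding bij_betw_def inj_on_def by blast
qed

lemma uniq_iso:
  assumes cg: "connected_graph V E" and c: "card V \<ge> 2" and u: "uniqMMD V E"
  shows "\<exists>a>0. graph_iso (SR_verts V E) (SR_edges V E) (aK2_verts a) (aK2_edges a)"
proof -
  define S where "S = SR_verts V E"
  define \<sigma> where "\<sigma> = (\<lambda>x. THE y. MMD V E x y)"
  have sm: "\<And>x. x \<in> S \<Longrightarrow> MMD V E x (\<sigma> x)" using sigma_facts(1)[OF cg c u] unfolding S_def \<sigma>_def by blast
  have sS: "\<And>x. x \<in> S \<Longrightarrow> \<sigma> x \<in> S" using sigma_facts(2)[OF cg c u] unfolding S_def \<sigma>_def by blast
  have sne: "\<And>x. x \<in> S \<Longrightarrow> \<sigma> x \<noteq> x" using sigma_facts(3)[OF cg c u] unfolding S_def \<sigma>_def by blast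
  have ss: "\<And>x. x \<in> S \<Longrightarrow> \<sigma> (\<sigma> x) = x" using sigma_facts(4)[OF cg c u] unfolding S_def \<sigma>_def by blast
  have su: "\<And>x y. x \<in> S \<Longrightarrow> MMD V E x y \<Longrightarrow> y = \<sigma> x"
    using sigma_facts(5)[OF cg c u] unfolding S_def \<sigma>_def by blast
  define Q where "Q = (\<lambda>x. {x, \<sigma> x}) ` S"
  have finS: "finite S" unfolding S_def SR_verts_def using cg_facts(1)[OF cg] by auto
  then have finQ: "finite Q" unfolding Q_def by auto
  obtain e where e: "bij_betw e Q {0..<card Q}" using ex_bij_betw_finite_nat[OF finQ] by blast
  define r where "r = (\<lambda>q::'a set. SOME x. x \<in> q)"
  have rq: "\<And>x. r {x, \<sigma> x} \<in> {x, \<sigma> x}" unfolding r_def by (rule someI) auto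
  have pair_eq: "\<And>x y. x \<in> S \<Longrightarrow> y \<in> S \<Longrightarrow> {x, \<sigma> x} = {y, \<sigma> y} \<longleftrightarrow> (y = x \<or> y = \<sigma> x)"
  proof -
    fix x y assume x: "x \<in> S" and y: "y \<in> S"
    show "{x, \<sigma> x} = {y, \<sigma> y} \<longleftrightarrow> (y = x \<or> y = \<sigma> x)"
    proof
      assume "{x, \<sigma> x} = {y, \<sigma> y}"
      then have "y \<in> {x, \<sigma> x}" by auto
      then show "y = x \<or> y = \<sigma> x" by auto
    next
      assume "y = x \<or> y = \<sigma> x"
      then show "{x, \<sigma> x} = {y, \<sigma> y}" using ss[OF x] by auto
    qed
  qed
  have einj: "\<And>x y. x \<in> S \<Longrightarrow> y \<in> S \<Longrightarrow> e {x, \<sigma> x} = e {y, \<sigma> y} \<Longrightarrow> {x, \<sigma> x} = {y, \<sigma> y}"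
  proof -
    fix x y assume "x \<in> S" "y \<in> S" "e {x, \<sigma> x} = e {y, \<sigma> y}"
    moreover have "inj_on e Q" using e unfolding bij_betw_def by auto
    ultimately show "{x, \<sigma> x} = {y, \<sigma> y}" unfolding Q_def inj_on_def by blast
  qed
  define a where "a = card Q"
  define f where "f = (\<lambda>x. (e {x, \<sigma> x}, x = r {x, \<sigma> x}))"
  have edge: "\<And>x y. x \<in> S \<Longrightarrow> y \<in> S \<Longrightarrow> (f x, f y) \<in> aK2_edges a \<longleftrightarrow> y = \<sigma> x"
  proof -
    fix x y assume x: "x \<in> S" and y: "y \<in> S"
    have ea: "e {x, \<sigma> x} < a" using e x unfolding a_def Q_def bij_betw_def by auto
    show "(f x, f y) \<in> aK2_edges a \<longleftrightarrow> y = \<sigma> x"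
    proof
      assume "(f x, f y) \<in> aK2_edges a"
      then have eq: "e {y, \<sigma> y} = e {x, \<sigma> x}" and ne: "(x = r {x, \<sigma> x}) \<noteq> (y = r {y, \<sigma> y})"
        unfolding f_def aK2_edges_def by auto
      have "{x, \<sigma> x} = {y, \<sigma> y}" using einj[OF y x eq] by simp
      then have "y = x \<or> y = \<sigma> x" using pair_eq[OF x y] by simp
      then show "y = \<sigma> x" using ne by auto
    next
      assume yx: "y = \<sigma> x"
      have q: "{y, \<sigma> y} = {x, \<sigma> x}" using yx ss[OF x] by auto
      have "(x = r {x, \<sigma> x}) \<noteq> (y = r {x, \<sigma> x})" using rq[of x] sne[OF x] yx by auto
      then show "(f x, f y) \<in> aK2_edges a" unfolding f_def aK2_edges_def using q ea by auto
    qed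
  qed
  have inj: "inj_on f S"
  proof (rule inj_onI)
    fix x y assume x: "x \<in> S" and y: "y \<in> S" and fxy: "f x = f y"
    then have eq: "e {x, \<sigma> x} = e {y, \<sigma> y}" and b: "(x = r {x, \<sigma> x}) = (y = r {y, \<sigma> y})"
      unfolding f_def by auto
    have q: "{x, \<sigma> x} = {y, \<sigma> y}" using einj[OF x y eq] .
    then have "y = x \<or> y = \<sigma> x" using pair_eq[OF x y] by simp
    moreover have "y = \<sigma> x \<Longrightarrow> False"
    proof -
      assume yx: "y = \<sigma> x"
      have "(x = r {x, \<sigma> x}) \<noteq> (y = r {x, \<sigma> x})" using rq[of x] sne[OF x] yx by auto
      then show False using b q by simp
    qed
    ultimately show "x = y" by auto
  qed
  have img: "f ` S = aK2_verts a"
  proof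
    show "f ` S \<subseteq> aK2_verts a"
    proof
      fix y assume "y \<in> f ` S"
      then obtain x where x: "x \<in> S" and yx: "y = f x" by blast
      have "{x, \<sigma> x} \<in> Q" unfolding Q_def using x by (rule imageI)
      then have "e {x, \<sigma> x} \<in> {0..<card Q}" using e unfolding bij_betw_def by blast
      then have "e {x, \<sigma> x} < a" unfolding a_def by simp
      then show "y \<in> aK2_verts a" unfolding yx f_def aK2_verts_def by simp
    qed
    show "aK2_verts a \<subseteq> f ` S"
    proof
      fix ip assume "ip \<in> aK2_verts a"
      then obtain i p where ip: "ip = (i,p)" "i < a" unfolding aK2_verts_def by auto
      then have "i \<in> e ` Q" using e unfolding bij_betw_def a_def by auto
      then obtain x where x: "x \<in> S" and ei: "e {x, \<sigma> x} = i" unfolding Q_def by auto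
      define z where "z = r {x, \<sigma> x}"
      have z: "z = x \<or> z = \<sigma> x" using rq[of x] unfolding z_def by auto
      then have zS: "z \<in> S" using x sS by auto
      have qz: "{z, \<sigma> z} = {x, \<sigma> x}" using z ss[OF x] by auto
      have fz: "f z = (i, True)" unfolding f_def qz ei z_def[symmetric] by simp
      have qsz: "{\<sigma> z, \<sigma> (\<sigma> z)} = {x, \<sigma> x}" using qz ss[OF zS] by auto
      have fsz: "f (\<sigma> z) = (i, False)" unfolding f_def qsz ei z_def[symmetric] using sne[OF zS] by simp
      show "ip \<in> f ` S"
      proof (cases p)
        case True then show ?thesis using ip(1) fz zS by (metis image_eqI)
      next
        case False then show ?thesis using ip(1) fsz sS[OF zS] by (metis image_eqI)
      qed
    qed
  qed
  have iso: "graph_iso S (SR_edges V E) (aK2_verts a) (aK2_edges a)"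
    unfolding graph_iso_def
  proof (intro exI[of _ f] conjI ballI)
    show "bij_betw f S (aK2_verts a)" using inj img unfolding bij_betw_def by auto
    fix x y assume x: "x \<in> S" and y: "y \<in> S"
    have "(x, y) \<in> SR_edges V E \<longleftrightarrow> MMD V E x y"
      using x y unfolding SR_edges_def S_def SR_verts_def by auto
    also have "\<dots> \<longleftrightarrow> y = \<sigma> x" using su[OF x] sm[OF x] by blast
    also have "\<dots> \<longleftrightarrow> (f x, f y) \<in> aK2_edges a" using edge[OF x y] by simp
    finally show "(x, y) \<in> SR_edges V E \<longleftrightarrow> (f x, f y) \<in> aK2_edges a" .
  qed
  obtain p q where pq: "MMD V E p q" using diam_pair[OF cg] by blast
  have "p \<in> S" unfolding S_def SR_verts_def using mmd_in[OF pq] pq by blast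
  then have "Q \<noteq> {}" unfolding Q_def by blast
  then have "a > 0" unfolding a_def using finQ card_gt_0_iff by blast
  moreover have "graph_iso (SR_verts V E) (SR_edges V E) (aK2_verts a) (aK2_edges a)"
    using iso unfolding S_def .
  ultimately show ?thesis by blast
qed

lemma prod_uniq:
  assumes cG: "connected_graph VG EG" and cH: "connected_graph VH EH"
    and uG: "uniqMMD VG EG" and uH: "uniqMMD VH EH"
  shows "uniqMMD (cart_verts VG VH) (cart_edges VG EG VH EH)"
  unfolding uniqMMD_def
proof (intro allI impI)
  fix x y z
  assume xy: "MMD (cart_verts VG VH) (cart_edges VG EG VH EH) x y"
    and xz: "MMD (cart_verts VG VH) (cart_edges VG EG VH EH) x z"
  obtain g h where x: "x = (g,h)" by (cases x)
  obtain g1 h1 where y: "y = (g1,h1)" by (cases y)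
  obtain g2 h2 where z: "z = (g2,h2)" by (cases z)
  have "MMD VG EG g g1" "MMD VH EH h h1" using xy unfolding x y prod_MMD[OF cG cH] by auto
  moreover have "MMD VG EG g g2" "MMD VH EH h h2" using xz unfolding x z prod_MMD[OF cG cH] by auto
  ultimately have "g1 = g2" "h1 = h2" using uG uH unfolding uniqMMD_def by blast+
  then show "y = z" using y z by simp
qed

lemma breaker_prod:
  assumes cG: "connected_graph VG EG" and cH: "connected_graph VH EH"
    and c1: "card VG \<ge> 2" and c2: "card VH \<ge> 2"
    and nu: "\<not> (uniqMMD VG EG \<and> uniqMMD VH EH)"
  shows "breaker_wins_B (cart_verts VG VH) (SR_win (cart_verts VG VH) (cart_edges VG EG VH EH)) {} {} \<and>
         breaker_wins_M (cart_verts VG VH) (SR_win (cart_verts VG VH) (cart_edges VG EG VH EH)) {} {}"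
proof -
  let ?V = "cart_verts VG VH" and ?E = "cart_edges VG EG VH EH"
  have cP: "connected_graph ?V ?E" by (rule prod_connected[OF cG cH])
  have cardP: "card ?V \<ge> 2" by (rule prod_card[OF cg_facts(1)[OF cG] cg_facts(1)[OF cH] c1 c2])
  have finP: "finite ?V" by (rule cg_facts(1)[OF cP])
  have bad: "\<And>p q M. MMD ?V ?E p q \<Longrightarrow> p \<notin> M \<Longrightarrow> q \<notin> M \<Longrightarrow> \<not> SR_win ?V ?E M"
    using SR_win_bad[OF cP cardP] by blast
  have mm: "\<And>g g' h h'. MMD VG EG g g' \<Longrightarrow> MMD VH EH h h' \<Longrightarrow> MMD ?V ?E (g,h) (g',h')"
    using prod_MMD[OF cG cH] by blast
  have inP: "\<And>g h. g \<in> VG \<Longrightarrow> h \<in> VH \<Longrightarrow> (g,h) \<in> ?V" unfolding cart_verts_def by blast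
  show ?thesis
  proof (cases "uniqMMD VG EG")
    case False
    then obtain g g1 g2 where m1: "MMD VG EG g g1" and m2: "MMD VG EG g g2" and ne: "g1 \<noteq> g2"
      unfolding uniqMMD_def by blast
    obtain h h' where mh: "MMD VH EH h h'" using diam_pair[OF cH] by blast
    have mh': "MMD VH EH h' h" by (rule mmd_sym[OF mh])
    have hne: "h \<noteq> h'" by (rule mmd_irrefl[OF cH c2 mh])
    have gne: "g \<noteq> g1" "g \<noteq> g2" using mmd_irrefl[OF cG c1 m1] mmd_irrefl[OF cG c1 m2] by auto
    have iG: "g \<in> VG" "g1 \<in> VG" "g2 \<in> VG" using mmd_in[OF m1] mmd_in[OF m2] by auto
    have iH: "h \<in> VH" "h' \<in> VH" using mmd_in[OF mh] by auto
    show ?thesis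
    proof (rule two_cherries[where c="(g,h)" and la="(g1,h')" and lb="(g2,h')"
          and c'="(g,h')" and la'="(g1,h)" and lb'="(g2,h)"])
      show "finite ?V" by (rule finP)
      show "\<And>M. (g, h) \<notin> M \<Longrightarrow> (g1, h') \<notin> M \<Longrightarrow> \<not> SR_win ?V ?E M" by (rule bad[OF mm[OF m1 mh]])
      show "\<And>M. (g, h) \<notin> M \<Longrightarrow> (g2, h') \<notin> M \<Longrightarrow> \<not> SR_win ?V ?E M" by (rule bad[OF mm[OF m2 mh]])
      show "\<And>M. (g, h') \<notin> M \<Longrightarrow> (g1, h) \<notin> M \<Longrightarrow> \<not> SR_win ?V ?E M" by (rule bad[OF mm[OF m1 mh']])
      show "\<And>M. (g, h') \<notin> M \<Longrightarrow> (g2, h) \<notin> M \<Longrightarrow> \<not> SR_win ?V ?E M" by (rule bad[OF mm[OF m2 mh']])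
    qed (use inP iG iH hne gne ne in auto)
  next
    case True
    then have "\<not> uniqMMD VH EH" using nu by blast
    then obtain h h1 h2 where m1: "MMD VH EH h h1" and m2: "MMD VH EH h h2" and ne: "h1 \<noteq> h2"
      unfolding uniqMMD_def by blast
    obtain g g' where mg: "MMD VG EG g g'" using diam_pair[OF cG] by blast
    have mg': "MMD VG EG g' g" by (rule mmd_sym[OF mg])
    have gne: "g \<noteq> g'" by (rule mmd_irrefl[OF cG c1 mg])
    have hne: "h \<noteq> h1" "h \<noteq> h2" using mmd_irrefl[OF cH c2 m1] mmd_irrefl[OF cH c2 m2] by auto
    have iH: "h \<in> VH" "h1 \<in> VH" "h2 \<in> VH" using mmd_in[OF m1] mmd_in[OF m2] by auto
    have iG: "g \<in> VG" "g' \<in> VG" using mmd_in[OF mg] by auto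
    show ?thesis
    proof (rule two_cherries[where c="(g,h)" and la="(g',h1)" and lb="(g',h2)"
          and c'="(g',h)" and la'="(g,h1)" and lb'="(g,h2)"])
      show "finite ?V" by (rule finP)
      show "\<And>M. (g, h) \<notin> M \<Longrightarrow> (g', h1) \<notin> M \<Longrightarrow> \<not> SR_win ?V ?E M" by (rule bad[OF mm[OF mg m1]])
      show "\<And>M. (g, h) \<notin> M \<Longrightarrow> (g', h2) \<notin> M \<Longrightarrow> \<not> SR_win ?V ?E M" by (rule bad[OF mm[OF mg m2]])
      show "\<And>M. (g', h) \<notin> M \<Longrightarrow> (g, h1) \<notin> M \<Longrightarrow> \<not> SR_win ?V ?E M" by (rule bad[OF mm[OF mg' m1]])
      show "\<And>M. (g', h) \<notin> M \<Longrightarrow> (g, h2) \<notin> M \<Longrightarrow> \<not> SR_win ?V ?E M" by (rule bad[OF mm[OF mg' m2]])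
    qed (use inP iG iH hne gne ne in auto)
  qed
qed

lemma SR_excl:
  assumes "maker_wins_M V (SR_win V E) M B" and "breaker_wins_M V (SR_win V E) M B"
  shows False
proof (rule exclusive(1)[where W="SR_win V E"])
  show "\<And>M M'. M \<subseteq> M' \<Longrightarrow> SR_win V E M \<Longrightarrow> SR_win V E M'" by (rule SR_win_mono)
qed (rule assms)+

theorem mainTheorem14:
  fixes VG :: "'a set" and EG :: "('a \<times> 'a) set"
    and VH :: "'b set" and EH :: "('b \<times> 'b) set"
  assumes "connected_graph VG EG" and "card VG \<ge> 2"
    and "connected_graph VH EH" and "card VH \<ge> 2"
  shows "(O_SR (cart_verts VG VH) (cart_edges VG EG VH EH) Outcome_M \<or>
          O_SR (cart_verts VG VH) (cart_edges VG EG VH EH) Outcome_B) \<and>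
         (O_SR (cart_verts VG VH) (cart_edges VG EG VH EH) Outcome_M \<longleftrightarrow>
          (\<exists>a b. a > 0 \<and> b > 0 \<and>
             graph_iso (SR_verts VG EG) (SR_edges VG EG) (aK2_verts a) (aK2_edges a) \<and>
             graph_iso (SR_verts VH EH) (SR_edges VH EH) (aK2_verts b) (aK2_edges b)))"
proof -
  let ?V = "cart_verts VG VH" and ?E = "cart_edges VG EG VH EH"
  note cG = assms(1) and c1 = assms(2) and cH = assms(3) and c2 = assms(4)
  have cP: "connected_graph ?V ?E" by (rule prod_connected[OF cG cH])
  have cardP: "card ?V \<ge> 2" by (rule prod_card[OF cg_facts(1)[OF cG] cg_facts(1)[OF cH] c1 c2])
  have OM: "O_SR ?V ?E Outcome_M \<longleftrightarrow> maker_wins_M ?V (SR_win ?V ?E) {} {} \<and> maker_wins_B ?V (SR_win ?V ?E) {} {}"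
    unfolding O_SR_def by simp
  have OB: "O_SR ?V ?E Outcome_B \<longleftrightarrow> breaker_wins_M ?V (SR_win ?V ?E) {} {} \<and> breaker_wins_B ?V (SR_win ?V ?E) {} {}"
    unfolding O_SR_def by simp
  show ?thesis
  proof (cases "uniqMMD VG EG \<and> uniqMMD VH EH")
    case True
    have uP: "uniqMMD ?V ?E" using prod_uniq[OF cG cH] True by blast
    have mk: "O_SR ?V ?E Outcome_M" using maker_uniq[OF cP cardP uP] OM by blast
    obtain a where a: "a > 0" "graph_iso (SR_verts VG EG) (SR_edges VG EG) (aK2_verts a) (aK2_edges a)"
      using uniq_iso[OF cG c1] True by blast
    obtain b where b: "b > 0" "graph_iso (SR_verts VH EH) (SR_edges VH EH) (aK2_verts b) (aK2_edges b)"
      using uniq_iso[OF cH c2] True by blast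
    show ?thesis using mk a b by blast
  next
    case False
    have bk: "breaker_wins_B ?V (SR_win ?V ?E) {} {} \<and> breaker_wins_M ?V (SR_win ?V ?E) {} {}"
      by (rule breaker_prod[OF cG cH c1 c2 False])
    have ob: "O_SR ?V ?E Outcome_B" using bk OB by blast
    have nm: "\<not> O_SR ?V ?E Outcome_M"
    proof
      assume "O_SR ?V ?E Outcome_M"
      then have "maker_wins_M ?V (SR_win ?V ?E) {} {}" using OM by blast
      moreover have "breaker_wins_M ?V (SR_win ?V ?E) {} {}" using bk by blast
      ultimately show False by (rule SR_excl)
    qed
    have nr: "\<not> (\<exists>a b. a > 0 \<and> b > 0 \<and>
             graph_iso (SR_verts VG EG) (SR_edges VG EG) (aK2_verts a) (aK2_edges a) \<and>
             graph_iso (SR_verts VH EH) (SR_edges VH EH) (aK2_verts b) (aK2_edges b))"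
    proof
      assume "\<exists>a b. a > 0 \<and> b > 0 \<and>
             graph_iso (SR_verts VG EG) (SR_edges VG EG) (aK2_verts a) (aK2_edges a) \<and>
             graph_iso (SR_verts VH EH) (SR_edges VH EH) (aK2_verts b) (aK2_edges b)"
      then obtain a b where i1:
        "graph_iso (SR_verts VG EG) (SR_edges VG EG) (aK2_verts a) (aK2_edges a)"
        and i2: "graph_iso (SR_verts VH EH) (SR_edges VH EH) (aK2_verts b) (aK2_edges b)" by blast
      have "uniqMMD VG EG" by (rule iso_uniq[OF i1])
      moreover have "uniqMMD VH EH" by (rule iso_uniq[OF i2])
      ultimately show False using False by blast
    qed
    show ?thesis using ob nm nr by blast
  qed
qed

end
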